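(* Let $\beta,\kappa\ge0$ and let $\gamma$ be a simple loop in $E_N$ with $\partial\hat\partial\gamma\subseteq E_N$. Then $|\mathbb E_{N,\beta,\kappa}[W_\gamma]|\le e^{-|\gamma\setminus\gamma_c|\,\alpha_5(\beta,\kappa)}$.
   Context: $G=\mathbb Z_n$, $\rho$ faithful unitary one-dimensional. On $\mathbb Z^4$: $E_N,P_N$ oriented edges/plaquettes with vertices in $B_N=[-N,N]^4\cap\mathbb Z^4$; $\partial p$ oriented boundary edges; $\hat\partial e=\{p:e\in\partial p\}$. $\Sigma_{E_N}$: $\sigma:E_N\to G$, $\sigma_{-e}=-\sigma_e$, $(d\sigma)_p=\sum_{e\in\partial p}\sigma_e$; $\mu_{N,\beta,\kappa}(\sigma)\propto\exp(\beta\sum_p\rho((d\sigma)_p)+\kappa\sum_e\rho(\sigma_e))$. Simple loop: set $\gamma$ of oriented edges, $e\in\gamma\Rightarrow-e\notin\gamma$, orderable into an oriented loop; $W_\gamma=\rho(\sum_{e\in\gamma}\sigma_e)$; $\gamma_c$ is the set of $e\in\gamma$ sharing a plaquette with another edge of $\gamma\cup(-\gamma)$. With $\varphi_r(g)=e^{r(\mathrm{Re}\rho(g)-1)}$: $\alpha_5(\beta,\kappa)=\min_{g_1,\dots,g_6\in G}\Bigl(1-\Bigl|\frac{\sum_g\rho(g)(\prod_{k=1}^6\varphi_\beta(g+g_k)^2)\varphi_\kappa(g)^2}{\sum_g(\prod_{k=1}^6\varphi_\beta(g+g_k)^2)\varphi_\kappa(g)^2}\Bigr|\Bigr)$. *)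

theory Defs
  imports "HOL-Analysis.Analysis"
begin

text \<open>The group G = Z_n is represented by the integers {0..<n} with addition mod n.
 A faithful unitary one-dimensional representation is a map rho on {0..<n}.\<close>

definition faithful_unitary_char :: "int \<Rightarrow> (int \<Rightarrow> complex) \<Rightarrow> bool" where
  "faithful_unitary_char n \<rho> \<longleftrightarrow>
     (\<forall>a\<in>{0..<n}. \<forall>b\<in>{0..<n}. \<rho> ((a + b) mod n) = \<rho> a * \<rho> b) \<and>
     (\<forall>g\<in>{0..<n}. cmod (\<rho> g) = 1) \<and> inj_on \<rho> {0..<n}"

type_synonym vtx = "int ^ 4"
type_synonym edge = "vtx \<times> vtx"
type_synonym plaq = "vtx \<times> 4 \<times> 4"

definition unitv :: "4 \<Rightarrow> vtx" where
  "unitv i = (\<chi> j. if j = i then 1 else 0)"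

definition box :: "nat \<Rightarrow> vtx set" where
  "box N = {x. \<forall>k. \<bar>x $ k\<bar> \<le> int N}"

definition is_edge :: "edge \<Rightarrow> bool" where
  "is_edge e \<longleftrightarrow> (\<exists>i. snd e = fst e + unitv i \<or> fst e = snd e + unitv i)"

definition rev_edge :: "edge \<Rightarrow> edge" where
  "rev_edge e = (snd e, fst e)"

definition edges :: "nat \<Rightarrow> edge set" where
  "edges N = {e. is_edge e \<and> fst e \<in> box N \<and> snd e \<in> box N}"

text \<open>oriented plaquettes of Z^4: (x,i,j), i \<noteq> j, with corners x, x+e_i, x+e_i+e_j, x+e_j;
  (x,j,i) is the same plaquette with the opposite orientation\<close>
definition plaquettes :: "plaq set" where
  "plaquettes = {(x, i, j). i \<noteq> j}"

definition pbd :: "plaq \<Rightarrow> edge set" where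
  "pbd p = (case p of (x, i, j) \<Rightarrow>
     {(x, x + unitv i), (x + unitv i, x + unitv i + unitv j),
      (x + unitv i + unitv j, x + unitv j), (x + unitv j, x)})"

definition plaqs :: "nat \<Rightarrow> plaq set" where
  "plaqs N = {(x, i, j). i \<noteq> j \<and> x \<in> box N \<and> x + unitv i \<in> box N \<and>
                x + unitv j \<in> box N \<and> x + unitv i + unitv j \<in> box N}"

definition configs :: "int \<Rightarrow> nat \<Rightarrow> (edge \<Rightarrow> int) set" where
  "configs n N = {\<sigma>. (\<forall>e\<in>edges N. \<sigma> e \<in> {0..<n} \<and> \<sigma> (rev_edge e) = (- \<sigma> e) mod n) \<and>
                      (\<forall>e. e \<notin> edges N \<longrightarrow> \<sigma> e = 0)}"

definition dsig :: "int \<Rightarrow> (edge \<Rightarrow> int) \<Rightarrow> plaq \<Rightarrow> int" where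
  "dsig n \<sigma> p = (\<Sum>e\<in>pbd p. \<sigma> e) mod n"

text \<open>Unnormalised Gibbs weight. The exponent
  beta * sum_p rho((d sigma)_p) + kappa * sum_e rho(sigma_e) is real, since both sums run over
  both orientations; we take its real part explicitly.\<close>
definition gibbs_weight :: "int \<Rightarrow> (int \<Rightarrow> complex) \<Rightarrow> nat \<Rightarrow> real \<Rightarrow> real \<Rightarrow> (edge \<Rightarrow> int) \<Rightarrow> real" where
  "gibbs_weight n \<rho> N \<beta> \<kappa> \<sigma> =
     exp (Re (complex_of_real \<beta> * (\<Sum>p\<in>plaqs N. \<rho> (dsig n \<sigma> p)) +
              complex_of_real \<kappa> * (\<Sum>e\<in>edges N. \<rho> (\<sigma> e))))"

definition expect :: "int \<Rightarrow> (int \<Rightarrow> complex) \<Rightarrow> nat \<Rightarrow> real \<Rightarrow> real \<Rightarrow> ((edge \<Rightarrow> int) \<Rightarrow> complex) \<Rightarrow> complex" where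
  "expect n \<rho> N \<beta> \<kappa> f =
     (\<Sum>\<sigma>\<in>configs n N. f \<sigma> * complex_of_real (gibbs_weight n \<rho> N \<beta> \<kappa> \<sigma>)) /
     complex_of_real (\<Sum>\<sigma>\<in>configs n N. gibbs_weight n \<rho> N \<beta> \<kappa> \<sigma>)"

definition wilson_loop :: "int \<Rightarrow> (int \<Rightarrow> complex) \<Rightarrow> edge set \<Rightarrow> (edge \<Rightarrow> int) \<Rightarrow> complex" where
  "wilson_loop n \<rho> \<gamma> \<sigma> = \<rho> ((\<Sum>e\<in>\<gamma>. \<sigma> e) mod n)"

definition simple_loop :: "edge set \<Rightarrow> bool" where
  "simple_loop \<gamma> \<longleftrightarrow> (\<forall>e\<in>\<gamma>. is_edge e) \<and> (\<forall>e\<in>\<gamma>. rev_edge e \<notin> \<gamma>) \<and>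
     (\<exists>es. es \<noteq> [] \<and> distinct es \<and> set es = \<gamma> \<and>
        (\<forall>k<length es. snd (es ! k) = fst (es ! ((k + 1) mod length es))))"

definition cobd :: "edge set \<Rightarrow> plaq set" where
  "cobd \<gamma> = {p \<in> plaquettes. \<exists>e\<in>\<gamma>. e \<in> pbd p}"

definition bd_set :: "plaq set \<Rightarrow> edge set" where
  "bd_set P = (\<Union>p\<in>P. pbd p)"

definition gamma_c :: "edge set \<Rightarrow> edge set" where
  "gamma_c \<gamma> = {e \<in> \<gamma>. \<exists>p\<in>plaquettes. e \<in> pbd p \<and>
                   (\<exists>e'\<in>\<gamma> \<union> rev_edge ` \<gamma>. e' \<noteq> e \<and> e' \<in> pbd p)}"

definition phi :: "real \<Rightarrow> (int \<Rightarrow> complex) \<Rightarrow> int \<Rightarrow> real" where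
  "phi r \<rho> g = exp (r * (Re (\<rho> g) - 1))"

definition alpha5_weight :: "int \<Rightarrow> (int \<Rightarrow> complex) \<Rightarrow> real \<Rightarrow> real \<Rightarrow> int list \<Rightarrow> int \<Rightarrow> real" where
  "alpha5_weight n \<rho> \<beta> \<kappa> gs g =
     (\<Prod>k<6. (phi \<beta> \<rho> ((g + gs ! k) mod n))\<^sup>2) * (phi \<kappa> \<rho> g)\<^sup>2"

definition alpha5 :: "int \<Rightarrow> (int \<Rightarrow> complex) \<Rightarrow> real \<Rightarrow> real \<Rightarrow> real" where
  "alpha5 n \<rho> \<beta> \<kappa> = Min ((\<lambda>gs. 1 - cmod
      ((\<Sum>g\<in>{0..<n}. \<rho> g * complex_of_real (alpha5_weight n \<rho> \<beta> \<kappa> gs g)) /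
       complex_of_real (\<Sum>g\<in>{0..<n}. alpha5_weight n \<rho> \<beta> \<kappa> gs g)))
      ` {gs. length gs = 6 \<and> set gs \<subseteq> {0..<n}})"

end

theory Submission imports Defs begin

lemma rev_rev[simp]: "rev_edge (rev_edge e) = e" by (simp add: rev_edge_def)
lemma rev_inj: "inj rev_edge" by (metis injI rev_rev)

lemma unitv_nth: "unitv i $ j = (if j = i then 1 else 0)" by (simp add: unitv_def)

lemma unitv_eq_iff[simp]: "unitv i = unitv j \<longleftrightarrow> i = j"
proof
  assume "unitv i = unitv j"
  then have "unitv i $ i = unitv j $ i" by simp
  then show "i = j" by (simp add: unitv_nth split: if_splits)
qed simp

lemma unitv_sum_ne0: "unitv i + unitv j \<noteq> 0"
proof
  assume "unitv i + unitv j = 0"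
  then have "(unitv i + unitv j) $ i = 0" by simp
  then show False by (simp add: unitv_nth split: if_splits)
qed

lemma unitv_ne0: "unitv i \<noteq> 0"
proof
  assume "unitv i = 0"
  then have "unitv i $ i = 0" by simp
  then show False by (simp add: unitv_nth)
qed

lemma is_edge_ne: "is_edge e \<Longrightarrow> fst e \<noteq> snd e"
  using unitv_ne0 unfolding is_edge_def by (metis add_cancel_left_right)

lemma rev_ne: "is_edge e \<Longrightarrow> rev_edge e \<noteq> e"
  using is_edge_ne[of e] by (auto simp: rev_edge_def prod_eq_iff)

lemma is_edge_rev: "is_edge (rev_edge e) = is_edge e"
  by (auto simp: is_edge_def rev_edge_def)

lemma edges_rev: "e \<in> edges N \<Longrightarrow> rev_edge e \<in> edges N"
  by (auto simp: edges_def is_edge_rev) (auto simp: rev_edge_def)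

lemma edges_rev_iff: "rev_edge e \<in> edges N \<longleftrightarrow> e \<in> edges N"
  by (metis edges_rev rev_rev)

definition swp :: "plaq \<Rightarrow> plaq" where "swp p = (case p of (x,i,j) \<Rightarrow> (x,j,i))"

lemma swp_swp[simp]: "swp (swp p) = p" by (cases p) (auto simp: swp_def)

lemma pbd_swp: "pbd (swp p) = rev_edge ` pbd p"
  by (cases p) (auto simp: swp_def pbd_def rev_edge_def add.commute add.left_commute)

lemma swp_plaquettes: "p \<in> plaquettes \<Longrightarrow> swp p \<in> plaquettes"
  by (cases p) (auto simp: swp_def plaquettes_def)

lemma plaqs_of_pbd:
  assumes "p \<in> plaquettes" "pbd p \<subseteq> edges N" shows "p \<in> plaqs N"
proof -
  obtain x i j where p: "p = (x,i,j)" by (cases p) auto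
  show ?thesis using assms unfolding p plaquettes_def plaqs_def pbd_def edges_def by auto
qed

locale chr =
  fixes n :: int and \<rho> :: "int \<Rightarrow> complex"
  assumes npos: "n > 0" and fc: "faithful_unitary_char n \<rho>"
begin

lemma mult: "a \<in> {0..<n} \<Longrightarrow> b \<in> {0..<n} \<Longrightarrow> \<rho> ((a + b) mod n) = \<rho> a * \<rho> b"
  using fc unfolding faithful_unitary_char_def by blast

lemma norm1: "g \<in> {0..<n} \<Longrightarrow> cmod (\<rho> g) = 1"
  using fc unfolding faithful_unitary_char_def by blast

lemma modin: "x mod n \<in> {0..<n}" using npos by simp

lemma rho0: "\<rho> 0 = 1"
proof -
  have "\<rho> 0 * \<rho> 0 = \<rho> 0 * 1" using mult[of 0 0] npos by simp
  moreover have "\<rho> 0 \<noteq> 0" using norm1[of 0] npos by auto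
  ultimately show ?thesis using mult_left_cancel by blast
qed

lemma mult_mod: "\<rho> ((a + b) mod n) = \<rho> (a mod n) * \<rho> (b mod n)"
proof -
  have "(a + b) mod n = (a mod n + b mod n) mod n" by (simp add: mod_add_eq)
  then show ?thesis using mult[OF modin modin] by simp
qed

lemma norm_mod: "cmod (\<rho> (x mod n)) = 1" using norm1 modin by blast

lemma neg_mod: "\<rho> ((- x) mod n) = cnj (\<rho> (x mod n))"
proof -
  have "\<rho> ((x + - x) mod n) = \<rho> (x mod n) * \<rho> ((- x) mod n)" by (rule mult_mod)
  then have "\<rho> (x mod n) * \<rho> ((- x) mod n) = 1" using rho0 by simp
  moreover have "\<rho> (x mod n) * cnj (\<rho> (x mod n)) = 1"
    using norm_mod[of x] by (metis complex_norm_square mult.commute of_real_1 power_one complex_mult_cnj) 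
  ultimately show ?thesis
    by (metis mult.commute mult.left_neutral mult.assoc)
qed

lemma re_neg_mod: "Re (\<rho> ((- x) mod n)) = Re (\<rho> (x mod n))"
  using neg_mod by simp

lemma sum_mod: "finite A \<Longrightarrow> \<rho> ((\<Sum>x\<in>A. f x) mod n) = (\<Prod>x\<in>A. \<rho> (f x mod n))"
proof (induction A rule: finite_induct)
  case empty then show ?case using rho0 by simp
next
  case (insert a A)
  then show ?case by (simp add: mult_mod)
qed

end

definition Qp :: "edge \<Rightarrow> plaq set" where "Qp e = {p\<in>plaquettes. e \<in> pbd p}"

lemma Q_fwd: "Qp (x, x + unitv i) =
  (\<lambda>(j,b). if b then (x,i,j) else (x - unitv j, j, i)) ` ({j. j\<noteq>i} \<times> UNIV)"
proof (rule set_eqI, rule iffI)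
  fix p assume "p \<in> Qp (x, x + unitv i)"
  then obtain y a b where p: "p = (y,a,b)" and ab: "a \<noteq> b" and
    m: "(x, x + unitv i) \<in> pbd (y,a,b)"
    unfolding Qp_def plaquettes_def by auto
  from m have "(x = y \<and> x + unitv i = y + unitv a) \<or>
     (x = y + unitv a \<and> x + unitv i = y + unitv a + unitv b) \<or>
     (x = y + unitv a + unitv b \<and> x + unitv i = y + unitv b) \<or>
     (x = y + unitv b \<and> x + unitv i = y)" by (auto simp: pbd_def)
  then show "p \<in> (\<lambda>(j,b). if b then (x,i,j) else (x - unitv j, j, i)) ` ({j. j\<noteq>i} \<times> UNIV)"
  proof (elim disjE conjE)
    assume h: "x = y" "x + unitv i = y + unitv a"
    then have "a = i" by simp
    then show ?thesis using h ab p by (auto intro!: image_eqI[where x="(b,True)"])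
  next
    assume h: "x = y + unitv a" "x + unitv i = y + unitv a + unitv b"
    then have "b = i" by simp
    moreover have "y = x - unitv a" using h by simp
    ultimately show ?thesis using h ab p by (auto intro!: image_eqI[where x="(a,False)"])
  next
    assume h: "x = y + unitv a + unitv b" "x + unitv i = y + unitv b"
    then have "y + unitv b + (unitv a + unitv i) = y + unitv b + 0" by (simp add: algebra_simps)
    then have "unitv a + unitv i = 0" by (metis add_left_cancel)
    then show ?thesis using unitv_sum_ne0 by blast
  next
    assume h: "x = y + unitv b" "x + unitv i = y"
    then have "y + (unitv b + unitv i) = y + 0" by (simp add: algebra_simps)
    then have "unitv b + unitv i = 0" by (metis add_left_cancel)
    then show ?thesis using unitv_sum_ne0 by blast
  qed
next
  fix p assume "p \<in> (\<lambda>(j,b). if b then (x,i,j) else (x - unitv j, j, i)) ` ({j. j\<noteq>i} \<times> UNIV)"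
  then obtain j b where j: "j \<noteq> i" and p: "p = (if b then (x,i,j) else (x - unitv j, j, i))" by auto
  show "p \<in> Qp (x, x + unitv i)"
    using j unfolding p Qp_def plaquettes_def pbd_def by auto
qed

lemma card_Q_fwd: "card (Qp (x, x + unitv i)) = 6"
proof -
  let ?f = "(\<lambda>(j,b). if b then (x,i,j) else (x - unitv j, j, i))"
  have inj: "inj_on ?f ({j. j\<noteq>i} \<times> UNIV)"
    by (auto simp: inj_on_def split: if_splits)
  have c3: "card {j::4. j\<noteq>i} = 3"
  proof -
    have "{j::4. j\<noteq>i} = UNIV - {i}" by auto
    then show ?thesis by (simp add: card_Diff_singleton)
  qed
  have "card (Qp (x, x + unitv i)) = card ({j. j\<noteq>i} \<times> (UNIV::bool set))"
    unfolding Q_fwd by (rule card_image[OF inj])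
  also have "\<dots> = 6" by (simp add: card_cartesian_product c3)
  finally show ?thesis .
qed

lemma swp_inj: "inj swp" by (metis injI swp_swp)

lemma Q_rev: "Qp (rev_edge e) = swp ` Qp e"
proof (rule set_eqI, rule iffI)
  fix p assume "p \<in> Qp (rev_edge e)"
  then have "swp p \<in> Qp e" unfolding Qp_def
    by (auto simp: pbd_swp swp_plaquettes) (metis image_eqI rev_rev)
  then show "p \<in> swp ` Qp e" by (metis image_eqI swp_swp)
next
  fix p assume "p \<in> swp ` Qp e"
  then show "p \<in> Qp (rev_edge e)" unfolding Qp_def by (auto simp: pbd_swp swp_plaquettes)
qed

lemma card_Q: assumes "is_edge e" shows "card (Qp e) = 6"
proof -
  from assms obtain i where "snd e = fst e + unitv i \<or> fst e = snd e + unitv i"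
    unfolding is_edge_def by auto
  then show ?thesis
  proof
    assume "snd e = fst e + unitv i"
    then have "e = (fst e, fst e + unitv i)" by (metis prod.collapse)
    then show ?thesis by (metis card_Q_fwd)
  next
    assume "fst e = snd e + unitv i"
    then have "rev_edge e = (snd e, snd e + unitv i)" by (simp add: rev_edge_def)
    then have "card (Qp (rev_edge e)) = 6" by (simp add: card_Q_fwd)
    moreover have "Qp e = swp ` Qp (rev_edge e)" using Q_rev[of "rev_edge e"] by simp
    ultimately show ?thesis using card_image swp_inj by (metis inj_on_subset subset_UNIV)
  qed
qed

lemma finite_Q: "is_edge e \<Longrightarrow> finite (Qp e)"
  using card_Q by (metis card.infinite zero_neq_numeral)


lemma finite_box: "finite (box N)"
proof -
  have "vec_nth ` box N \<subseteq> PiE UNIV (\<lambda>_. {-int N..int N})"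
    apply (auto simp: box_def abs_le_iff) by (metis minus_le_iff)
  then have "finite (vec_nth ` box N)" by (rule finite_subset) (simp add: finite_PiE)
  then show ?thesis by (rule finite_imageD) (simp add: inj_on_def vec_eq_iff)
qed

lemma finite_edges: "finite (edges N)"
proof -
  have "edges N \<subseteq> box N \<times> box N" by (auto simp: edges_def)
  then show ?thesis using finite_box by (meson finite_SigmaI finite_subset)
qed

lemma finite_plaqs: "finite (plaqs N)"
proof -
  have "plaqs N \<subseteq> box N \<times> (UNIV::4 set) \<times> (UNIV :: 4 set)" by (auto simp: plaqs_def)
  moreover have "finite (box N \<times> (UNIV::4 set) \<times> (UNIV :: 4 set))"
    using finite_box by (simp add: finite_cartesian_product)
  ultimately show ?thesis using finite_subset by blast
qed

lemma plaqs_sub: "plaqs N \<subseteq> plaquettes" by (auto simp: plaqs_def plaquettes_def)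

locale setting = chr +
  fixes N :: nat and \<beta> \<kappa> :: real and \<gamma> :: "edge set"
  assumes bpos: "\<beta> \<ge> 0" and kpos: "\<kappa> \<ge> 0" and sl: "simple_loop \<gamma>"
    and gE: "\<gamma> \<subseteq> edges N" and bdE: "bd_set (cobd \<gamma>) \<subseteq> edges N"
begin

definition "S = \<gamma> - gamma_c \<gamma>"
definition "G = {0..<n}"
definition "C = configs n N"
definition "C0 = {\<tau>\<in>C. \<forall>e\<in>S. \<tau> e = 0}"
definition "H = PiE S (\<lambda>_. G)"
definition "upd \<tau> h e = (if e \<in> S then h e else if rev_edge e \<in> S then (- h (rev_edge e)) mod n else \<tau> e)"

lemma fin_g: "finite \<gamma>" using sl unfolding simple_loop_def by auto
lemma fin_S: "finite S" using fin_g unfolding S_def by auto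
lemma fin_G: "finite G" by (simp add: G_def)
lemma S_sub: "S \<subseteq> \<gamma>" by (auto simp: S_def)
lemma S_edges: "e \<in> S \<Longrightarrow> e \<in> edges N" using S_sub gE by auto
lemma g_rev: "e \<in> \<gamma> \<Longrightarrow> rev_edge e \<notin> \<gamma>" using sl unfolding simple_loop_def by auto
lemma S_rev: "e \<in> S \<Longrightarrow> rev_edge e \<notin> S" using g_rev S_sub by (meson subsetD)
lemma is_edge_S: "e \<in> S \<Longrightarrow> is_edge e" using S_edges by (auto simp: edges_def)

lemma nonshare:
  assumes "e \<in> S" "p \<in> plaquettes" "e \<in> pbd p" "e' \<in> pbd p" "e' \<noteq> e"
  shows "e' \<notin> \<gamma> \<and> rev_edge e' \<notin> \<gamma>"
proof -
  have "e \<notin> gamma_c \<gamma>" "e \<in> \<gamma>" using assms(1) by (auto simp: S_def)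
  then have "\<not> (e' \<in> \<gamma> \<union> rev_edge ` \<gamma>)" using assms unfolding gamma_c_def by blast
  then show ?thesis by (metis UnI1 UnI2 image_eqI rev_rev)
qed

lemma nonshareQ:
  assumes "e \<in> S" "p \<in> Qp e" "e' \<in> pbd p" "e' \<noteq> e"
  shows "e' \<notin> S \<and> rev_edge e' \<notin> S"
  using nonshare[of e p e'] assms S_sub unfolding Qp_def by auto

lemma Q_edges: assumes "e \<in> S" "p \<in> Qp e" shows "pbd p \<subseteq> edges N"
proof -
  have "p \<in> cobd \<gamma>" using assms S_sub unfolding Qp_def cobd_def by auto
  then show ?thesis using bdE unfolding bd_set_def by auto
qed

lemma upd_in: assumes "\<tau> \<in> C" "h \<in> H" shows "upd \<tau> h \<in> C"
proof -
  have hG: "\<And>e. e \<in> S \<Longrightarrow> h e \<in> G" using assms(2) by (auto simp: H_def)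
  have tC: "\<forall>e\<in>edges N. \<tau> e \<in> {0..<n} \<and> \<tau> (rev_edge e) = (- \<tau> e) mod n"
     "\<forall>e. e \<notin> edges N \<longrightarrow> \<tau> e = 0" using assms(1) by (auto simp: C_def configs_def)
  have 1: "upd \<tau> h e \<in> {0..<n}" if "e \<in> edges N" for e
    using hG[of e] tC that npos by (auto simp: upd_def G_def)
  have 2: "upd \<tau> h (rev_edge e) = (- upd \<tau> h e) mod n" if "e \<in> edges N" for e
  proof (cases "e \<in> S")
    case True then show ?thesis using S_rev[OF True] by (simp add: upd_def)
  next
    case F: False
    show ?thesis
    proof (cases "rev_edge e \<in> S")
      case True
      then have "h (rev_edge e) \<in> {0..<n}" using hG G_def by auto
      then show ?thesis using True F by (simp add: upd_def mod_minus_eq)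
    next
      case False then show ?thesis using F tC that by (simp add: upd_def)
    qed
  qed
  have 3: "upd \<tau> h e = 0" if "e \<notin> edges N" for e
  proof -
    have "e \<notin> S" "rev_edge e \<notin> S" using that S_edges edges_rev_iff by blast+
    then show ?thesis using tC(2)[rule_format, OF that] by (simp add: upd_def)
  qed
  show ?thesis using 1 2 3 unfolding C_def configs_def by auto
qed

lemma bij: "bij_betw (\<lambda>(\<tau>,h). upd \<tau> h) (C0 \<times> H) C"
proof (rule bij_betw_imageI)
  show "inj_on (\<lambda>(\<tau>,h). upd \<tau> h) (C0 \<times> H)"
  proof (rule inj_onI, clarify)
    fix \<tau> h \<tau>' h' assume t: "\<tau> \<in> C0" "h \<in> H" "\<tau>' \<in> C0" "h' \<in> H" and eq: "upd \<tau> h = upd \<tau>' h'"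
    have "h e = h' e" for e
    proof (cases "e \<in> S")
      case True then show ?thesis using fun_cong[OF eq, of e] by (simp add: upd_def)
    next
      case False then show ?thesis using t by (metis H_def PiE_arb)
    qed
    moreover have "\<tau> e = \<tau>' e" for e
    proof -
      have z: "\<sigma> e = 0" if "\<sigma> \<in> C0" "e \<in> S \<or> rev_edge e \<in> S" for \<sigma>
      proof -
        have "\<forall>e\<in>edges N. \<sigma> (rev_edge e) = (- \<sigma> e) mod n" "\<forall>e\<in>S. \<sigma> e = 0"
          using that(1) by (auto simp: C0_def C_def configs_def)
        then show ?thesis using that(2) S_edges by (metis add.inverse_neutral mod_0 rev_rev)
      qed
      show ?thesis
      proof (cases "e \<in> S \<or> rev_edge e \<in> S")
        case True then show ?thesis using z t by metis
      next
        case False then show ?thesis using fun_cong[OF eq, of e] by (simp add: upd_def)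
      qed
    qed
    ultimately show "\<tau> = \<tau>' \<and> h = h'" by auto
  qed
next
  show "(\<lambda>(\<tau>,h). upd \<tau> h) ` (C0 \<times> H) = C"
  proof
    show "(\<lambda>(\<tau>,h). upd \<tau> h) ` (C0 \<times> H) \<subseteq> C" using upd_in C0_def by auto
  next
    show "C \<subseteq> (\<lambda>(\<tau>,h). upd \<tau> h) ` (C0 \<times> H)"
    proof
      fix \<sigma> assume sC: "\<sigma> \<in> C"
      have sp: "\<forall>e\<in>edges N. \<sigma> e \<in> {0..<n} \<and> \<sigma> (rev_edge e) = (- \<sigma> e) mod n"
        "\<forall>e. e \<notin> edges N \<longrightarrow> \<sigma> e = 0" using sC by (auto simp: C_def configs_def)
      define \<tau> where "\<tau> e = (if e \<in> S \<or> rev_edge e \<in> S then 0 else \<sigma> e)" for e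
      define h where "h = restrict \<sigma> S"
      have "\<tau> \<in> C" using sp npos unfolding C_def configs_def \<tau>_def by (auto simp: edges_rev_iff)
      then have "\<tau> \<in> C0" by (simp add: C0_def \<tau>_def)
      moreover have "h \<in> H" using sp S_edges by (auto simp: H_def h_def G_def)
      moreover have "upd \<tau> h = \<sigma>"
      proof
        fix e show "upd \<tau> h e = \<sigma> e"
        proof (cases "rev_edge e \<in> S \<and> e \<notin> S")
          case True
          then have "rev_edge e \<in> edges N" using S_edges by blast
          then show ?thesis using True sp(1)[rule_format, of "rev_edge e"] by (simp add: upd_def h_def)
        next
          case False then show ?thesis by (auto simp: upd_def \<tau>_def h_def)
        qed
      qed
      ultimately show "\<sigma> \<in> (\<lambda>(\<tau>,h). upd \<tau> h) ` (C0 \<times> H)" by force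
    qed
  qed
qed

end

lemma Qrev_mem: "p \<in> Qp (rev_edge e) \<longleftrightarrow> swp p \<in> Qp e"
  using Q_rev[of e] by (metis image_iff swp_swp)

context setting begin

definition "ES = S \<union> rev_edge ` S"
definition "PS = (\<Union>e\<in>S. Qp e \<union> Qp (rev_edge e))"
definition "av \<tau> e p = (\<Sum>e'\<in>pbd p - {e}. \<tau> e')"
definition "L \<tau> e g = 2*\<beta>*(\<Sum>p\<in>Qp e. Re (\<rho> ((g + av \<tau> e p) mod n))) + 2*\<kappa>*Re (\<rho> g)"
definition "R \<tau> = \<beta>*(\<Sum>p\<in>plaqs N - PS. Re (\<rho> (dsig n \<tau> p))) + \<kappa>*(\<Sum>e\<in>edges N - ES. Re (\<rho> (\<tau> e)))"

lemma finQ: "e \<in> S \<Longrightarrow> finite (Qp e)" using finite_Q is_edge_S by blast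
lemma finQr: "e \<in> S \<Longrightarrow> finite (Qp (rev_edge e))" using finite_Q is_edge_S is_edge_rev by blast

lemma Qr_edges: assumes "e \<in> S" "p \<in> Qp (rev_edge e)" shows "pbd p \<subseteq> edges N"
proof -
  have "swp p \<in> Qp e" using assms Qrev_mem by blast
  then have "pbd (swp p) \<subseteq> edges N" using Q_edges assms by blast
  then have "rev_edge ` pbd (swp p) \<subseteq> edges N" using edges_rev by blast
  then show ?thesis using pbd_swp[of "swp p"] by simp
qed

lemma PS_sub: "PS \<subseteq> plaqs N"
proof
  fix p assume "p \<in> PS"
  then obtain e where e: "e \<in> S" "p \<in> Qp e \<or> p \<in> Qp (rev_edge e)" by (auto simp: PS_def)
  have "pbd p \<subseteq> edges N" using e Q_edges Qr_edges by blast
  moreover have "p \<in> plaquettes" using e by (auto simp: Qp_def)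
  ultimately show "p \<in> plaqs N" by (rule plaqs_of_pbd[rotated])
qed

lemma disj_self: assumes "e \<in> S" shows "Qp e \<inter> Qp (rev_edge e) = {}"
proof (rule ccontr)
  assume "Qp e \<inter> Qp (rev_edge e) \<noteq> {}"
  then obtain p where p: "p \<in> Qp e" "rev_edge e \<in> pbd p" by (auto simp: Qp_def)
  have "rev_edge e \<noteq> e" using rev_ne is_edge_S assms by blast
  then have "rev_edge (rev_edge e) \<notin> S" using nonshareQ[OF assms p] by blast
  then show False using assms by simp
qed

lemma disj_pair0: assumes "e1 \<in> S" "e2 \<in> S" "e1 \<noteq> e2" shows "Qp e1 \<inter> Qp e2 = {}"
proof (rule ccontr)
  assume "Qp e1 \<inter> Qp e2 \<noteq> {}"
  then obtain p where p: "p \<in> Qp e1" "e2 \<in> pbd p" by (auto simp: Qp_def)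
  then show False using nonshareQ[OF assms(1) p] assms by blast
qed

lemma disj_pair1: assumes "e1 \<in> S" "e2 \<in> S" shows "Qp e1 \<inter> Qp (rev_edge e2) = {}"
proof (rule ccontr)
  assume "Qp e1 \<inter> Qp (rev_edge e2) \<noteq> {}"
  then obtain p where p: "p \<in> Qp e1" "rev_edge e2 \<in> pbd p" by (auto simp: Qp_def)
  have "rev_edge e2 \<noteq> e1" using S_rev[OF assms(2)] assms(1) by auto
  then have "rev_edge (rev_edge e2) \<notin> S" using nonshareQ[OF assms(1) p] by blast
  then show False using assms by simp
qed

lemma disj_pair: assumes "e1 \<in> S" "e2 \<in> S" "e1 \<noteq> e2"
  shows "(Qp e1 \<union> Qp (rev_edge e1)) \<inter> (Qp e2 \<union> Qp (rev_edge e2)) = {}"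
proof -
  have "Qp (rev_edge e1) \<inter> Qp (rev_edge e2) = {}"
    using disj_pair0[OF assms] Qrev_mem by blast
  then show ?thesis using disj_pair0[OF assms] disj_pair1[OF assms(1,2)] disj_pair1[OF assms(2,1)]
    by blast
qed

lemma re_expo: "Re (complex_of_real b * (\<Sum>p\<in>P. f p) + complex_of_real k * (\<Sum>e\<in>E. g e))
   = b * (\<Sum>p\<in>P. Re (f p)) + k * (\<Sum>e\<in>E. Re (g e))"
  by (simp add: Re_sum)

lemma dsig_outside:
  assumes "p \<in> plaqs N - PS"
  shows "dsig n (upd \<tau> h) p = dsig n \<tau> p"
proof -
  have "upd \<tau> h e' = \<tau> e'" if "e' \<in> pbd p" for e'
  proof -
    have pp: "p \<in> plaquettes" using assms plaqs_sub by auto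
    have "e' \<notin> S"
    proof
      assume "e' \<in> S" then have "p \<in> PS" using that pp by (auto simp: PS_def Qp_def)
      then show False using assms by auto
    qed
    moreover have "rev_edge e' \<notin> S"
    proof
      assume a: "rev_edge e' \<in> S"
      have "p \<in> Qp (rev_edge (rev_edge e'))" using that pp by (simp add: Qp_def)
      then have "p \<in> PS" unfolding PS_def using a by blast
      then show False using assms by auto
    qed
    ultimately show ?thesis by (simp add: upd_def)
  qed
  then show ?thesis by (simp add: dsig_def)
qed

lemma finite_pbd: "finite (pbd p)" by (cases p) (simp add: pbd_def)

lemma dsig_inQ:
  assumes "e \<in> S" "p \<in> Qp e"
  shows "dsig n (upd \<tau> h) p = (h e + av \<tau> e p) mod n"
proof -
  have ep: "e \<in> pbd p" using assms by (simp add: Qp_def)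
  have "(\<Sum>e'\<in>pbd p. upd \<tau> h e') = upd \<tau> h e + (\<Sum>e'\<in>pbd p - {e}. upd \<tau> h e')"
    using ep finite_pbd by (simp add: sum.remove)
  also have "(\<Sum>e'\<in>pbd p - {e}. upd \<tau> h e') = av \<tau> e p"
    unfolding av_def by (rule sum.cong) (use nonshareQ[OF assms] in \<open>auto simp: upd_def\<close>)
  finally show ?thesis using assms(1) by (simp add: dsig_def upd_def)
qed

lemma dsig_swp:
  assumes "\<sigma> \<in> C" "pbd p \<subseteq> edges N"
  shows "Re (\<rho> (dsig n \<sigma> (swp p))) = Re (\<rho> (dsig n \<sigma> p))"
proof -
  have sp: "\<And>e. e \<in> edges N \<Longrightarrow> \<sigma> (rev_edge e) = (- \<sigma> e) mod n"
    using assms(1) by (auto simp: C_def configs_def)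
  have "(\<Sum>e\<in>pbd (swp p). \<sigma> e) = (\<Sum>e\<in>pbd p. \<sigma> (rev_edge e))"
    unfolding pbd_swp by (simp add: sum.reindex[OF inj_on_subset[OF rev_inj subset_UNIV]] o_def)
  also have "\<dots> = (\<Sum>e\<in>pbd p. (- \<sigma> e) mod n)" using assms(2) sp by (auto intro!: sum.cong)
  finally have "dsig n \<sigma> (swp p) = (\<Sum>e\<in>pbd p. (- \<sigma> e) mod n) mod n" by (simp add: dsig_def)
  also have "\<dots> = (- (\<Sum>e\<in>pbd p. \<sigma> e)) mod n" by (simp add: mod_sum_eq sum_negf)
  finally have "dsig n \<sigma> (swp p) = (- (\<Sum>e\<in>pbd p. \<sigma> e)) mod n" .
  then show ?thesis using re_neg_mod by (simp add: dsig_def)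
qed

lemma plaq_split:
  assumes "\<sigma> \<in> C"
  shows "(\<Sum>p\<in>plaqs N. Re (\<rho> (dsig n \<sigma> p))) =
     (\<Sum>p\<in>plaqs N - PS. Re (\<rho> (dsig n \<sigma> p))) + (\<Sum>e\<in>S. 2 * (\<Sum>p\<in>Qp e. Re (\<rho> (dsig n \<sigma> p))))"
proof -
  let ?f = "\<lambda>p. Re (\<rho> (dsig n \<sigma> p))"
  have "(\<Sum>p\<in>plaqs N. ?f p) = (\<Sum>p\<in>plaqs N - PS. ?f p) + (\<Sum>p\<in>PS. ?f p)"
    using PS_sub finite_plaqs by (metis add.commute sum.subset_diff)
  moreover have "(\<Sum>p\<in>PS. ?f p) = (\<Sum>e\<in>S. \<Sum>p\<in>Qp e \<union> Qp (rev_edge e). ?f p)"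
    unfolding PS_def
    by (rule sum.UNION_disjoint) (use fin_S finQ finQr disj_pair in auto)
  moreover have "(\<Sum>p\<in>Qp e \<union> Qp (rev_edge e). ?f p) = 2 * (\<Sum>p\<in>Qp e. ?f p)" if e: "e \<in> S" for e
  proof -
    have "(\<Sum>p\<in>Qp e \<union> Qp (rev_edge e). ?f p) = (\<Sum>p\<in>Qp e. ?f p) + (\<Sum>p\<in>Qp (rev_edge e). ?f p)"
      by (rule sum.union_disjoint) (use finQ finQr disj_self e in auto)
    moreover have "(\<Sum>p\<in>Qp (rev_edge e). ?f p) = (\<Sum>p\<in>Qp e. ?f (swp p))"
      unfolding Q_rev by (simp add: sum.reindex[OF inj_on_subset[OF swp_inj subset_UNIV]] o_def)
    moreover have "(\<Sum>p\<in>Qp e. ?f (swp p)) = (\<Sum>p\<in>Qp e. ?f p)"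
      by (rule sum.cong) (use dsig_swp[OF assms] Q_edges e in auto)
    ultimately show ?thesis by simp
  qed
  ultimately show ?thesis by simp
qed

lemma edge_split:
  "(\<Sum>e\<in>edges N. f e) = (\<Sum>e\<in>edges N - ES. f e) + (\<Sum>e\<in>S. f e + f (rev_edge e))"
proof -
  have ES_sub: "ES \<subseteq> edges N" using S_edges edges_rev by (auto simp: ES_def)
  have "(\<Sum>e\<in>edges N. f e) = (\<Sum>e\<in>edges N - ES. f e) + (\<Sum>e\<in>ES. f e)"
    using ES_sub finite_edges by (metis add.commute sum.subset_diff)
  moreover have "ES = (\<Union>e\<in>S. {e, rev_edge e})" by (auto simp: ES_def)
  moreover have "(\<Sum>e\<in>(\<Union>e\<in>S. {e, rev_edge e}). f e) = (\<Sum>e\<in>S. \<Sum>x\<in>{e, rev_edge e}. f x)"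
  proof (rule sum.UNION_disjoint)
    show "\<forall>i\<in>S. \<forall>j\<in>S. i \<noteq> j \<longrightarrow> {i, rev_edge i} \<inter> {j, rev_edge j} = {}"
    proof (intro ballI impI)
      fix i j assume ij: "i \<in> S" "j \<in> S" "i \<noteq> j"
      have "i \<noteq> rev_edge j" using S_rev[OF ij(2)] ij(1) by metis
      moreover have "rev_edge i \<noteq> j" using S_rev[OF ij(1)] ij(2) by metis
      moreover have "rev_edge i \<noteq> rev_edge j" using ij(3) by (metis rev_rev)
      ultimately show "{i, rev_edge i} \<inter> {j, rev_edge j} = {}" using ij(3) by blast
    qed
  qed (use fin_S in auto)
  moreover have "(\<Sum>x\<in>{e, rev_edge e}. f x) = f e + f (rev_edge e)" if "e \<in> S" for e
    using rev_ne[OF is_edge_S[OF that]] by simp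
  ultimately show ?thesis by simp
qed

lemma weight_dec:
  assumes t: "\<tau> \<in> C0" and h: "h \<in> H"
  shows "gibbs_weight n \<rho> N \<beta> \<kappa> (upd \<tau> h) = exp (R \<tau>) * (\<Prod>e\<in>S. exp (L \<tau> e (h e)))"
proof -
  let ?s = "upd \<tau> h"
  have sC: "?s \<in> C" using upd_in t h by (auto simp: C0_def)
  have hG: "\<And>e. e \<in> S \<Longrightarrow> h e \<in> {0..<n}" using h by (auto simp: H_def G_def)
  have P: "(\<Sum>p\<in>plaqs N. Re (\<rho> (dsig n ?s p))) =
     (\<Sum>p\<in>plaqs N - PS. Re (\<rho> (dsig n \<tau> p))) + (\<Sum>e\<in>S. 2 * (\<Sum>p\<in>Qp e. Re (\<rho> ((h e + av \<tau> e p) mod n))))"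
    unfolding plaq_split[OF sC]
    by (intro arg_cong2[where f="(+)"] sum.cong refl) (auto simp: dsig_outside dsig_inQ)
  have E1: "(\<Sum>e\<in>edges N - ES. Re (\<rho> (?s e))) = (\<Sum>e\<in>edges N - ES. Re (\<rho> (\<tau> e)))"
    by (rule sum.cong) (auto simp: ES_def upd_def, metis image_eqI rev_rev)
  have E2: "Re (\<rho> (?s e)) + Re (\<rho> (?s (rev_edge e))) = 2 * Re (\<rho> (h e))" if e: "e \<in> S" for e
  proof -
    have "?s e = h e" "?s (rev_edge e) = (- h e) mod n" using e S_rev[OF e] by (auto simp: upd_def)
    moreover have "h e mod n = h e" using hG[OF e] by simp
    ultimately show ?thesis using re_neg_mod[of "h e"] by simp
  qed
  have "gibbs_weight n \<rho> N \<beta> \<kappa> ?s = exp (\<beta> * (\<Sum>p\<in>plaqs N. Re (\<rho> (dsig n ?s p))) +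
      \<kappa> * (\<Sum>e\<in>edges N. Re (\<rho> (?s e))))"
    unfolding gibbs_weight_def re_expo ..
  also have "\<dots> = exp (R \<tau> + (\<Sum>e\<in>S. L \<tau> e (h e)))"
    unfolding P edge_split[of "\<lambda>e. Re (\<rho> (?s e))"] E1 R_def L_def
    using E2 by (simp add: sum.distrib sum_distrib_left algebra_simps)
  also have "\<dots> = exp (R \<tau>) * (\<Prod>e\<in>S. exp (L \<tau> e (h e)))"
    by (simp add: exp_add exp_sum fin_S)
  finally show ?thesis .
qed

end

context setting begin

definition "W0 \<tau> = \<rho> ((\<Sum>e\<in>\<gamma> - S. \<tau> e) mod n)"
definition "Z1 \<tau> e = (\<Sum>g\<in>G. \<rho> g * complex_of_real (exp (L \<tau> e g)))"
definition "Z0 \<tau> e = (\<Sum>g\<in>G. exp (L \<tau> e g))"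

lemma wil_dec:
  assumes h: "h \<in> H"
  shows "wilson_loop n \<rho> \<gamma> (upd \<tau> h) = W0 \<tau> * (\<Prod>e\<in>S. \<rho> (h e))"
proof -
  have hG: "\<And>e. e \<in> S \<Longrightarrow> h e \<in> {0..<n}" using h by (auto simp: H_def G_def)
  have "(\<Sum>e\<in>\<gamma>. upd \<tau> h e) = (\<Sum>e\<in>\<gamma> - S. upd \<tau> h e) + (\<Sum>e\<in>S. upd \<tau> h e)"
    using S_sub fin_g by (metis add.commute sum.subset_diff)
  also have "(\<Sum>e\<in>\<gamma> - S. upd \<tau> h e) = (\<Sum>e\<in>\<gamma> - S. \<tau> e)"
  proof (rule sum.cong)
    fix e assume "e \<in> \<gamma> - S"
    then have "e \<notin> S" "rev_edge e \<notin> S" using g_rev[of e] S_sub by blast+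
    then show "upd \<tau> h e = \<tau> e" by (simp add: upd_def)
  qed simp
  also have "(\<Sum>e\<in>S. upd \<tau> h e) = (\<Sum>e\<in>S. h e)" by (simp add: upd_def)
  finally have "wilson_loop n \<rho> \<gamma> (upd \<tau> h) = \<rho> (((\<Sum>e\<in>\<gamma> - S. \<tau> e) + (\<Sum>e\<in>S. h e)) mod n)"
    by (simp add: wilson_loop_def)
  also have "\<dots> = W0 \<tau> * \<rho> ((\<Sum>e\<in>S. h e) mod n)" by (simp add: mult_mod W0_def)
  also have "\<rho> ((\<Sum>e\<in>S. h e) mod n) = (\<Prod>e\<in>S. \<rho> (h e mod n))" by (rule sum_mod[OF fin_S])
  also have "\<dots> = (\<Prod>e\<in>S. \<rho> (h e))" using hG by (intro prod.cong) auto
  finally show ?thesis .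
qed

lemma phi_sq: "(phi r \<rho> x)\<^sup>2 = exp (2 * r * (Re (\<rho> x) - 1))"
  by (simp add: phi_def power2_eq_square exp_add[symmetric])

lemma alpha_le: "alpha5 n \<rho> \<beta> \<kappa> \<le> 1 - cmod
      ((\<Sum>g\<in>{0..<n}. \<rho> g * complex_of_real (alpha5_weight n \<rho> \<beta> \<kappa> gs g)) /
       complex_of_real (\<Sum>g\<in>{0..<n}. alpha5_weight n \<rho> \<beta> \<kappa> gs g))"
  if "length gs = 6" "set gs \<subseteq> {0..<n}"
  unfolding alpha5_def
proof (rule Min_le)
  show "finite ((\<lambda>gs. 1 - cmod
      ((\<Sum>g\<in>{0..<n}. \<rho> g * complex_of_real (alpha5_weight n \<rho> \<beta> \<kappa> gs g)) /
       complex_of_real (\<Sum>g\<in>{0..<n}. alpha5_weight n \<rho> \<beta> \<kappa> gs g)))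
      ` {gs. length gs = 6 \<and> set gs \<subseteq> {0..<n}})"
    using finite_lists_length_eq[of "{0..<n}" 6] by (simp add: conj_commute)
qed (use that in auto)

lemma alpha_le1: "alpha5 n \<rho> \<beta> \<kappa> \<le> 1"
  using alpha_le[of "replicate 6 0"] npos by (smt (verit) norm_ge_zero length_replicate set_replicate
      atLeastLessThan_iff empty_subsetI insert_subset numeral_neq_zero)

lemma local_bound:
  assumes e: "e \<in> S"
  shows "cmod (Z1 \<tau> e) \<le> (1 - alpha5 n \<rho> \<beta> \<kappa>) * Z0 \<tau> e"
proof -
  obtain ps where ps: "distinct ps" "set ps = Qp e" using finite_distinct_list finQ[OF e] by metis
  have len: "length ps = 6" using distinct_card[OF ps(1)] ps(2) card_Q is_edge_S e by metis
  define gs where "gs = map (\<lambda>p. av \<tau> e p mod n) ps"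
  have gsl: "length gs = 6" "set gs \<subseteq> {0..<n}" using len npos by (auto simp: gs_def)
  define K where "K = exp (- (12 * \<beta> + 2 * \<kappa>))"
  have Kpos: "K > 0" by (simp add: K_def)
  have wK: "alpha5_weight n \<rho> \<beta> \<kappa> gs g = K * exp (L \<tau> e g)" for g
  proof -
    have "(\<Prod>k<6. (phi \<beta> \<rho> ((g + gs ! k) mod n))\<^sup>2) =
        exp (\<Sum>k<length ps. 2 * \<beta> * (Re (\<rho> ((g + av \<tau> e (ps!k)) mod n)) - 1))"
      unfolding phi_sq exp_sum[OF finite_lessThan, symmetric] len
      by (intro arg_cong[where f=exp] sum.cong refl) (simp add: gs_def len mod_add_right_eq)
    also have "(\<Sum>k<length ps. 2 * \<beta> * (Re (\<rho> ((g + av \<tau> e (ps!k)) mod n)) - 1)) =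
        (\<Sum>p\<in>Qp e. 2 * \<beta> * (Re (\<rho> ((g + av \<tau> e p) mod n)) - 1))"
      using sum.reindex_bij_betw[OF bij_betw_nth[OF ps(1) refl ps(2)[symmetric]],
          of "\<lambda>p. 2 * \<beta> * (Re (\<rho> ((g + av \<tau> e p) mod n)) - 1)"] by simp
    also have "\<dots> = 2 * \<beta> * (\<Sum>p\<in>Qp e. Re (\<rho> ((g + av \<tau> e p) mod n))) - 12 * \<beta>"
      using card_Q[OF is_edge_S[OF e]]
      by (simp add: sum_subtractf sum_distrib_left[symmetric] algebra_simps)
    finally show ?thesis
      by (simp add: alpha5_weight_def phi_sq K_def L_def exp_add[symmetric] algebra_simps)
  qed
  have Z0pos: "Z0 \<tau> e > 0" unfolding Z0_def G_def
    by (rule sum_pos) (use npos in auto)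
  have num: "(\<Sum>g\<in>{0..<n}. \<rho> g * complex_of_real (alpha5_weight n \<rho> \<beta> \<kappa> gs g)) = K * Z1 \<tau> e"
    by (simp add: wK Z1_def G_def sum_distrib_left algebra_simps)
  have den: "(\<Sum>g\<in>{0..<n}. alpha5_weight n \<rho> \<beta> \<kappa> gs g) = K * Z0 \<tau> e"
    by (simp add: wK Z0_def G_def sum_distrib_left)
  have "cmod ((\<Sum>g\<in>{0..<n}. \<rho> g * complex_of_real (alpha5_weight n \<rho> \<beta> \<kappa> gs g)) /
       complex_of_real (\<Sum>g\<in>{0..<n}. alpha5_weight n \<rho> \<beta> \<kappa> gs g)) = cmod (Z1 \<tau> e) / Z0 \<tau> e"
    unfolding num den using Kpos Z0pos
    by (simp add: norm_divide norm_mult)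
  then have "cmod (Z1 \<tau> e) / Z0 \<tau> e \<le> 1 - alpha5 n \<rho> \<beta> \<kappa>" using alpha_le[OF gsl] by simp
  then show ?thesis using Z0pos by (simp add: divide_le_eq mult.commute)
qed

end

context setting begin

lemma sum_split:
  fixes F :: "(edge \<Rightarrow> int) \<Rightarrow> 'a::comm_monoid_add"
  shows "(\<Sum>\<sigma>\<in>C. F \<sigma>) = (\<Sum>\<tau>\<in>C0. \<Sum>h\<in>H. F (upd \<tau> h))"
proof -
  have "(\<Sum>\<sigma>\<in>C. F \<sigma>) = (\<Sum>x\<in>C0 \<times> H. F ((\<lambda>(\<tau>,h). upd \<tau> h) x))"
    using sum.reindex_bij_betw[OF bij, of F] by simp
  also have "\<dots> = (\<Sum>(\<tau>,h)\<in>C0 \<times> H. F (upd \<tau> h))" by (simp add: case_prod_beta')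
  also have "\<dots> = (\<Sum>\<tau>\<in>C0. \<Sum>h\<in>H. F (upd \<tau> h))" by (rule sum.cartesian_product[symmetric])
  finally show ?thesis .
qed

lemma num_eq:
  "(\<Sum>\<sigma>\<in>C. wilson_loop n \<rho> \<gamma> \<sigma> * complex_of_real (gibbs_weight n \<rho> N \<beta> \<kappa> \<sigma>)) =
   (\<Sum>\<tau>\<in>C0. (W0 \<tau> * complex_of_real (exp (R \<tau>))) * (\<Prod>e\<in>S. Z1 \<tau> e))"
  unfolding sum_split
proof (rule sum.cong[OF refl])
  fix \<tau> assume t: "\<tau> \<in> C0"
  have "(\<Sum>h\<in>H. wilson_loop n \<rho> \<gamma> (upd \<tau> h) * complex_of_real (gibbs_weight n \<rho> N \<beta> \<kappa> (upd \<tau> h)))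
     = (\<Sum>h\<in>H. (W0 \<tau> * complex_of_real (exp (R \<tau>))) *
          (\<Prod>e\<in>S. \<rho> (h e) * complex_of_real (exp (L \<tau> e (h e)))))"
    by (rule sum.cong[OF refl]) (simp add: wil_dec weight_dec t prod.distrib of_real_prod)
  also have "\<dots> = (W0 \<tau> * complex_of_real (exp (R \<tau>))) *
          (\<Sum>h\<in>H. \<Prod>e\<in>S. \<rho> (h e) * complex_of_real (exp (L \<tau> e (h e))))"
    by (simp add: sum_distrib_left)
  also have "(\<Sum>h\<in>H. \<Prod>e\<in>S. \<rho> (h e) * complex_of_real (exp (L \<tau> e (h e)))) = (\<Prod>e\<in>S. Z1 \<tau> e)"
    unfolding H_def Z1_def by (rule prod_sum_PiE[symmetric]) (use fin_S fin_G in auto)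
  finally show "(\<Sum>h\<in>H. wilson_loop n \<rho> \<gamma> (upd \<tau> h) * complex_of_real (gibbs_weight n \<rho> N \<beta> \<kappa> (upd \<tau> h)))
     = (W0 \<tau> * complex_of_real (exp (R \<tau>))) * (\<Prod>e\<in>S. Z1 \<tau> e)" .
qed

lemma den_eq:
  "(\<Sum>\<sigma>\<in>C. gibbs_weight n \<rho> N \<beta> \<kappa> \<sigma>) = (\<Sum>\<tau>\<in>C0. exp (R \<tau>) * (\<Prod>e\<in>S. Z0 \<tau> e))"
  unfolding sum_split
proof (rule sum.cong[OF refl])
  fix \<tau> assume t: "\<tau> \<in> C0"
  have "(\<Sum>h\<in>H. gibbs_weight n \<rho> N \<beta> \<kappa> (upd \<tau> h))
     = (\<Sum>h\<in>H. exp (R \<tau>) * (\<Prod>e\<in>S. exp (L \<tau> e (h e))))"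
    by (rule sum.cong[OF refl]) (simp add: weight_dec t)
  also have "\<dots> = exp (R \<tau>) * (\<Sum>h\<in>H. \<Prod>e\<in>S. exp (L \<tau> e (h e)))"
    by (simp add: sum_distrib_left)
  also have "(\<Sum>h\<in>H. \<Prod>e\<in>S. exp (L \<tau> e (h e))) = (\<Prod>e\<in>S. Z0 \<tau> e)"
    unfolding H_def Z0_def by (rule prod_sum_PiE[symmetric]) (use fin_S fin_G in auto)
  finally show "(\<Sum>h\<in>H. gibbs_weight n \<rho> N \<beta> \<kappa> (upd \<tau> h)) = exp (R \<tau>) * (\<Prod>e\<in>S. Z0 \<tau> e)" .
qed

lemma W0_norm: "cmod (W0 \<tau>) = 1" by (simp add: W0_def norm_mod)

lemma Z0_nonneg: "Z0 \<tau> e \<ge> 0" by (simp add: Z0_def sum_nonneg)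

lemma main:
  "cmod (expect n \<rho> N \<beta> \<kappa> (wilson_loop n \<rho> \<gamma>))
     \<le> exp (- real (card (\<gamma> - gamma_c \<gamma>)) * alpha5 n \<rho> \<beta> \<kappa>)"
proof -
  define c where "c = 1 - alpha5 n \<rho> \<beta> \<kappa>"
  have c0: "c \<ge> 0" using alpha_le1 by (simp add: c_def)
  define D where "D = (\<Sum>\<sigma>\<in>C. gibbs_weight n \<rho> N \<beta> \<kappa> \<sigma>)"
  define M where "M = (\<Sum>\<sigma>\<in>C. wilson_loop n \<rho> \<gamma> \<sigma> * complex_of_real (gibbs_weight n \<rho> N \<beta> \<kappa> \<sigma>))"
  have D0: "D \<ge> 0" unfolding D_def gibbs_weight_def by (simp add: sum_nonneg)
  have "cmod M \<le> (\<Sum>\<tau>\<in>C0. cmod ((W0 \<tau> * complex_of_real (exp (R \<tau>))) * (\<Prod>e\<in>S. Z1 \<tau> e)))"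
    unfolding M_def num_eq by (rule norm_sum)
  also have "\<dots> = (\<Sum>\<tau>\<in>C0. exp (R \<tau>) * (\<Prod>e\<in>S. cmod (Z1 \<tau> e)))"
    by (simp add: norm_mult W0_norm prod_norm)
  also have "\<dots> \<le> (\<Sum>\<tau>\<in>C0. exp (R \<tau>) * (\<Prod>e\<in>S. c * Z0 \<tau> e))"
    by (intro sum_mono mult_left_mono prod_mono) (auto simp: local_bound c_def)
  also have "\<dots> = c ^ card S * D"
    unfolding D_def den_eq by (simp add: prod.distrib sum_distrib_left algebra_simps)
  finally have MD: "cmod M \<le> c ^ card S * D" .
  have ex: "expect n \<rho> N \<beta> \<kappa> (wilson_loop n \<rho> \<gamma>) = M / complex_of_real D"
    unfolding expect_def M_def D_def C_def ..
  have "cmod (expect n \<rho> N \<beta> \<kappa> (wilson_loop n \<rho> \<gamma>)) \<le> c ^ card S"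
  proof (cases "D = 0")
    case True then show ?thesis by (simp add: ex c0)
  next
    case False
    then have "D > 0" using D0 by simp
    then show ?thesis using MD
      by (simp add: ex norm_divide divide_le_eq mult.commute)
  qed
  also have "c ^ card S \<le> exp (- alpha5 n \<rho> \<beta> \<kappa>) ^ card S"
    using c0 exp_ge_add_one_self[of "- alpha5 n \<rho> \<beta> \<kappa>"]
    by (intro power_mono) (auto simp: c_def)
  also have "\<dots> = exp (- real (card (\<gamma> - gamma_c \<gamma>)) * alpha5 n \<rho> \<beta> \<kappa>)"
    by (simp add: S_def exp_of_nat_mult[symmetric])
  finally show ?thesis .
qed

end

theorem mainTheorem19:
  fixes n :: int and \<rho> :: "int \<Rightarrow> complex" and N :: nat and \<beta> \<kappa> :: real
    and \<gamma> :: "edge set"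
  assumes "n > 0"
    and "faithful_unitary_char n \<rho>"
    and "\<beta> \<ge> 0" and "\<kappa> \<ge> 0"
    and "simple_loop \<gamma>"
    and "\<gamma> \<subseteq> edges N"
    and "bd_set (cobd \<gamma>) \<subseteq> edges N"
  shows "cmod (expect n \<rho> N \<beta> \<kappa> (wilson_loop n \<rho> \<gamma>))
           \<le> exp (- real (card (\<gamma> - gamma_c \<gamma>)) * alpha5 n \<rho> \<beta> \<kappa>)"
proof -
  interpret setting n \<rho> N \<beta> \<kappa> \<gamma>
    using assms by unfold_locales auto
  show ?thesis by (rule main)
qed

end
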